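(* Let $d\ge 1$ and let $(X_1,\ldots,X_d,Y)$ be a random vector with continuous marginal distribution functions and $(d+1)$-dimensional copula $C$; let $(U_1,\ldots,U_d,V)$ have standard uniform marginals and copula $C$. Fix $\boldsymbol{\alpha}\in[0,1)^d$ with $C(\boldsymbol{\alpha},1)<1$. Then for every $\beta\in(0,1)$, $$\mathrm{VCoVaR}_{\boldsymbol{\alpha},\beta}(Y|\boldsymbol X)=F_Y^{-1}\big(F^{-1}_{V|A_{\boldsymbol U}}(\beta)\big),$$ where $F_{V|A_{\boldsymbol U}}$ is the distribution function of $V$ given $A_{\boldsymbol U}=\{\exists\, i:U_i>\alpha_i\}$.
   Context: $C(\boldsymbol{\alpha},v)=C(\alpha_1,\ldots,\alpha_d,v)$. For a distribution function $F$, $F^{-1}(t)=\inf\{x:F(x)\ge t\}$; $\mathrm{VaR}_t(Z)=F_Z^{-1}(t)$. The vulnerability conditional value-at-risk is $\mathrm{VCoVaR}_{\boldsymbol{\alpha},\beta}(Y|\boldsymbol X)=\mathrm{VaR}_\beta\big(Y\,\big|\,\exists\, i: X_i>\mathrm{VaR}_{\alpha_i}(X_i)\big)$, i.e. the $\beta$-quantile (generalized inverse) of the conditional distribution of $Y$ given the event $\{\exists\, i: X_i>\mathrm{VaR}_{\alpha_i}(X_i)\}$. *)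

theory Defs
  imports "HOL-Probability.Probability"
begin

definition cdf_of :: "'a measure \<Rightarrow> ('a \<Rightarrow> real) \<Rightarrow> real \<Rightarrow> real" where
  "cdf_of M Z x = measure M {\<omega> \<in> space M. Z \<omega> \<le> x}"

text \<open>Generalized inverse F^{-1}(t) = inf {x. F x \<ge> t}, valued in the extended reals
  (so that inf of an unbounded-below set is -\<infinity> and inf of the empty set is +\<infinity>).\<close>
definition gen_inv :: "(real \<Rightarrow> real) \<Rightarrow> real \<Rightarrow> ereal" where
  "gen_inv F t = Inf {ereal x | x. t \<le> F x}"

definition VaR :: "'a measure \<Rightarrow> ('a \<Rightarrow> real) \<Rightarrow> real \<Rightarrow> ereal" where
  "VaR M Z t = gen_inv (cdf_of M Z) t"

definition cond_cdf :: "'a measure \<Rightarrow> 'a set \<Rightarrow> ('a \<Rightarrow> real) \<Rightarrow> real \<Rightarrow> real" where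
  "cond_cdf M A Z y = measure M (A \<inter> {\<omega> \<in> space M. Z \<omega> \<le> y}) / measure M A"

definition exceed_event :: "'a measure \<Rightarrow> nat \<Rightarrow> (nat \<Rightarrow> 'a \<Rightarrow> real) \<Rightarrow> (nat \<Rightarrow> real) \<Rightarrow> 'a set" where
  "exceed_event M d X \<alpha> = {\<omega> \<in> space M. \<exists>i<d. ereal (X i \<omega>) > VaR M (X i) (\<alpha> i)}"

definition VCoVaR :: "'a measure \<Rightarrow> nat \<Rightarrow> (nat \<Rightarrow> 'a \<Rightarrow> real) \<Rightarrow> ('a \<Rightarrow> real)
    \<Rightarrow> (nat \<Rightarrow> real) \<Rightarrow> real \<Rightarrow> ereal" where
  "VCoVaR M d X Y \<alpha> \<beta> = gen_inv (cond_cdf M (exceed_event M d X \<alpha>) Y) \<beta>"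

end

theory Submission
  imports Defs
begin

lemma cdf_of_eq:
  assumes "prob_space M" "Z \<in> borel_measurable M"
  shows "cdf_of M Z = cdf (distr M borel Z)"
proof
  fix x
  have "{\<omega> \<in> space M. Z \<omega> \<le> x} = Z -` {..x} \<inter> space M" by auto
  then show "cdf_of M Z x = cdf (distr M borel Z) x"
    using assms by (simp add: cdf_of_def cdf_def measure_distr)
qed

lemma cdf_of_props:
  assumes "prob_space M" "Z \<in> borel_measurable M"
  shows "(cdf_of M Z \<longlongrightarrow> 1) at_top" "(cdf_of M Z \<longlongrightarrow> 0) at_bot"
    "\<And>x. 0 \<le> cdf_of M Z x" "\<And>x. cdf_of M Z x \<le> 1" "mono (cdf_of M Z)"
proof -
  interpret real_distribution "distr M borel Z"
    using assms by (simp add: prob_space.real_distribution_distr)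
  show "(cdf_of M Z \<longlongrightarrow> 1) at_top" "(cdf_of M Z \<longlongrightarrow> 0) at_bot"
    "\<And>x. 0 \<le> cdf_of M Z x" "\<And>x. cdf_of M Z x \<le> 1" "mono (cdf_of M Z)"
    using cdf_lim_at_top_prob cdf_lim_at_bot cdf_nonneg cdf_bounded_prob cdf_nondecreasing
    by (auto simp: cdf_of_eq[OF assms] mono_def)
qed

lemma VaR_zero:
  assumes "prob_space M" "Z \<in> borel_measurable M"
  shows "VaR M Z 0 = -\<infinity>"
proof -
  have "{ereal x | x. 0 \<le> cdf_of M Z x} = range ereal"
    using cdf_of_props(3)[OF assms] by auto (metis ereal_cases)
  then show ?thesis unfolding VaR_def gen_inv_def
    by (metis ereal_bot Inf_lower rangeI)
qed

lemma gen_inv_interval: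
  assumes "\<And>x. a \<le> F x \<longleftrightarrow> t \<le> x"
  shows "gen_inv F a = ereal t"
  unfolding gen_inv_def
proof (rule antisym)
  show "Inf {ereal x |x. a \<le> F x} \<le> ereal t"
    by (rule Inf_lower) (use assms in auto)
  show "ereal t \<le> Inf {ereal x |x. a \<le> F x}"
    by (rule Inf_greatest) (use assms in auto)
qed

lemma VaR_quantile:
  assumes "prob_space M" "Z \<in> borel_measurable M" "continuous_on UNIV (cdf_of M Z)"
    and a: "0 < a" "a < 1"
  shows "\<exists>q. VaR M Z a = ereal q \<and> cdf_of M Z q = a"
proof -
  let ?F = "cdf_of M Z"
  define S where "S = {x. a \<le> ?F x}"
  have "eventually (\<lambda>x. ?F x > a) at_top"
    using cdf_of_props(1)[OF assms(1,2)] a by (simp add: order_tendstoD)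
  then obtain b where "\<And>x. x \<ge> b \<Longrightarrow> ?F x > a" by (auto simp: eventually_at_top_linorder)
  then have ne: "S \<noteq> {}" unfolding S_def by (metis less_imp_le mem_Collect_eq order_refl empty_iff)
  have "eventually (\<lambda>x. ?F x < a) at_bot"
    using cdf_of_props(2)[OF assms(1,2)] a by (simp add: order_tendstoD)
  then obtain c where c: "\<And>x. x \<le> c \<Longrightarrow> ?F x < a" by (auto simp: eventually_at_bot_linorder)
  have bdd: "bdd_below S" unfolding S_def
  proof (rule bdd_belowI)
    fix x assume "x \<in> {x. a \<le> ?F x}"
    then show "c \<le> x" using c[of x] by (cases "x \<le> c") auto
  qed
  have cl: "closed S" unfolding S_def
    by (rule closed_Collect_le) (use assms(3) in auto)
  define q where "q = Inf S"
  have qS: "q \<in> S" unfolding q_def using closed_contains_Inf[OF ne bdd cl] .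
  have low: "\<And>x. x \<in> S \<Longrightarrow> q \<le> x" unfolding q_def using bdd by (simp add: cInf_lower)
  have iff: "\<And>x. a \<le> ?F x \<longleftrightarrow> q \<le> x"
  proof
    fix x assume "a \<le> ?F x" then show "q \<le> x" using low S_def by auto
  next
    fix x assume "q \<le> x"
    then have "?F q \<le> ?F x" using cdf_of_props(5)[OF assms(1,2)] by (simp add: mono_def)
    then show "a \<le> ?F x" using qS S_def by auto
  qed
  have cl2: "closed {x. ?F x \<le> a}"
    by (rule closed_Collect_le) (use assms(3) in auto)
  have "{..<q} \<subseteq> {x. ?F x \<le> a}" using iff by (metis lessThan_iff mem_Collect_eq not_le less_imp_le subsetI)
  then have "closure {..<q} \<subseteq> {x. ?F x \<le> a}" using cl2 closure_minimal by blast
  then have "?F q \<le> a" by auto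
  then have "?F q = a" using qS S_def by auto
  moreover have "VaR M Z a = ereal q" unfolding VaR_def by (rule gen_inv_interval) (use iff in auto)
  ultimately show ?thesis by blast
qed

lemma level_set_interval:
  fixes H :: "real \<Rightarrow> real"
  assumes mono: "mono H" and one: "\<beta> \<le> H 1" and neg: "\<And>w. w < 0 \<Longrightarrow> H w < \<beta>"
    and L: "L > 0" and lip: "\<And>v w. v \<le> w \<Longrightarrow> H w - H v \<le> L * (w - v)"
  shows "\<exists>t. \<forall>w. \<beta> \<le> H w \<longleftrightarrow> t \<le> w"
proof -
  define S where "S = {w. \<beta> \<le> H w}"
  have ne: "S \<noteq> {}" using one S_def by auto
  have bdd: "bdd_below S" unfolding S_def
  proof (rule bdd_belowI)
    fix x assume "x \<in> {w. \<beta> \<le> H w}"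
    then show "0 \<le> x" using neg[of x] by (cases "x < 0") auto
  qed
  define t where "t = Inf S"
  have low: "\<And>x. x \<in> S \<Longrightarrow> t \<le> x" unfolding t_def using bdd by (simp add: cInf_lower)
  have Ht: "\<beta> \<le> H t"
  proof (rule ccontr)
    assume "\<not> \<beta> \<le> H t"
    then have pos: "(\<beta> - H t) / L > 0" using L by auto
    then have "Inf S < t + (\<beta> - H t) / L" using t_def by simp
    then obtain w where w: "w \<in> S" "w < t + (\<beta> - H t) / L"
      using cInf_less_iff[OF ne bdd] by blast
    have "t \<le> w" using low w by auto
    then have "H w - H t \<le> L * (w - t)" using lip by blast
    also have "\<dots> < L * ((\<beta> - H t) / L)" using w L by (intro mult_strict_left_mono) auto
    also have "\<dots> = \<beta> - H t" using L by simp
    finally have "H w < \<beta>" by simp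
    then show False using w S_def by auto
  qed
  have "\<forall>w. \<beta> \<le> H w \<longleftrightarrow> t \<le> w"
  proof (intro allI iffI)
    fix w assume "\<beta> \<le> H w" then show "t \<le> w" using low S_def by auto
  next
    fix w assume "t \<le> w" then have "H t \<le> H w" using mono by (simp add: mono_def)
    then show "\<beta> \<le> H w" using Ht by simp
  qed
  then show ?thesis by blast
qed

lemma measure_minus_inter_le:
  assumes "prob_space M" "A \<in> sets M" "B \<in> sets M"
  shows "measure M A - measure M (A \<inter> B) \<le> 1 - measure M B"
proof -
  interpret prob_space M by (rule assms(1))
  have "A \<subseteq> (A \<inter> B) \<union> (space M - B)" using assms sets.sets_into_space by blast
  then have "measure M A \<le> measure M ((A \<inter> B) \<union> (space M - B))"
    using assms by (intro finite_measure_mono) auto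
  also have "\<dots> \<le> measure M (A \<inter> B) + measure M (space M - B)"
    using assms by (intro measure_Un_le) auto
  also have "measure M (space M - B) = 1 - measure M B" using assms prob_compl by auto
  finally show ?thesis by simp
qed

theorem corollary3p3:
  fixes M :: "'a measure" and N :: "'b measure"
    and d :: nat
    and X :: "nat \<Rightarrow> 'a \<Rightarrow> real" and Y :: "'a \<Rightarrow> real"
    and U :: "nat \<Rightarrow> 'b \<Rightarrow> real" and V :: "'b \<Rightarrow> real"
    and C :: "(nat \<Rightarrow> real) \<Rightarrow> real \<Rightarrow> real"
    and \<alpha> :: "nat \<Rightarrow> real" and \<beta> :: real
  assumes d: "d \<ge> 1"
    and M: "prob_space M" and N: "prob_space N"
    and Xmeas: "\<And>i. i < d \<Longrightarrow> X i \<in> borel_measurable M"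
    and Ymeas: "Y \<in> borel_measurable M"
    and Xcont: "\<And>i. i < d \<Longrightarrow> continuous_on UNIV (cdf_of M (X i))"
    and Ycont: "continuous_on UNIV (cdf_of M Y)"
    and copXY: "\<And>x y. measure M {\<omega> \<in> space M. (\<forall>i<d. X i \<omega> \<le> x i) \<and> Y \<omega> \<le> y}
                 = C (\<lambda>i. cdf_of M (X i) (x i)) (cdf_of M Y y)"
    and Umeas: "\<And>i. i < d \<Longrightarrow> U i \<in> borel_measurable N"
    and Vmeas: "V \<in> borel_measurable N"
    and Uunif: "\<And>i t. i < d \<Longrightarrow> t \<in> {0..1} \<Longrightarrow> cdf_of N (U i) t = t"
    and Vunif: "\<And>t. t \<in> {0..1} \<Longrightarrow> cdf_of N V t = t"
    and copUV: "\<And>u v. (\<forall>i<d. u i \<in> {0..1}) \<Longrightarrow> v \<in> {0..1} \<Longrightarrow>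
                 measure N {\<omega> \<in> space N. (\<forall>i<d. U i \<omega> \<le> u i) \<and> V \<omega> \<le> v} = C u v"
    and alpha: "\<And>i. i < d \<Longrightarrow> \<alpha> i \<in> {0..<1}"
    and Calpha: "C \<alpha> 1 < 1"
    and beta: "\<beta> \<in> {0<..<1}"
  shows "VCoVaR M d X Y \<alpha> \<beta> =
           gen_inv (cdf_of M Y)
             (real_of_ereal (gen_inv (cond_cdf N {\<omega> \<in> space N. \<exists>i<d. U i \<omega> > \<alpha> i} V) \<beta>))"
proof -
  interpret PM: prob_space M by (rule M)
  interpret PN: prob_space N by (rule N)
  define FY where "FY = cdf_of M Y"
  define AX where "AX = exceed_event M d X \<alpha>"
  define AU where "AU = {\<omega> \<in> space N. \<exists>i<d. U i \<omega> > \<alpha> i}"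
  define BX where "BX = space M - AX"
  define EU where "EU = space N - AU"
  define YL where "YL y = {\<omega>\<in>space M. Y \<omega> \<le> y}" for y
  define VL where "VL v = {\<omega>\<in>space N. V \<omega> \<le> v}" for v
  have AXeq: "AX = (\<Union>i\<in>{..<d}. {\<omega>\<in>space M. VaR M (X i) (\<alpha> i) < ereal (X i \<omega>)})"
    unfolding AX_def exceed_event_def by auto
  have AXs: "AX \<in> sets M" unfolding AXeq
  proof (intro sets.finite_UN)
    fix i assume "i \<in> {..<d}"
    then have "X i \<in> borel_measurable M" using Xmeas by auto
    then show "{\<omega>\<in>space M. VaR M (X i) (\<alpha> i) < ereal (X i \<omega>)} \<in> sets M" by measurable
  qed auto
  have AUeq: "AU = (\<Union>i\<in>{..<d}. {\<omega>\<in>space N. \<alpha> i < U i \<omega>})"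
    unfolding AU_def by auto
  have AUs: "AU \<in> sets N" unfolding AUeq
  proof (intro sets.finite_UN)
    fix i assume "i \<in> {..<d}"
    then have "U i \<in> borel_measurable N" using Umeas by auto
    then show "{\<omega>\<in>space N. \<alpha> i < U i \<omega>} \<in> sets N" by measurable
  qed auto
  have BXs: "BX \<in> sets M" unfolding BX_def using AXs by auto
  have EUs: "EU \<in> sets N" unfolding EU_def using AUs by auto
  have YLs: "YL y \<in> sets M" for y unfolding YL_def using Ymeas by measurable
  have VLs: "VL v \<in> sets N" for v unfolding VL_def using Vmeas by measurable
  have FYr: "0 \<le> FY y" "FY y \<le> 1" for y
    unfolding FY_def using cdf_of_props[OF M Ymeas] by auto
  have FYlim: "(FY \<longlongrightarrow> 1) at_top" unfolding FY_def using cdf_of_props[OF M Ymeas] by auto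
  have FYm: "measure M (YL y) = FY y" for y unfolding FY_def YL_def cdf_of_def by simp
  have FVm: "measure N (VL v) = max 0 (min 1 v)" for v
  proof -
    have mV: "mono (cdf_of N V)" using cdf_of_props[OF N Vmeas] by auto
    have r: "0 \<le> cdf_of N V v" "cdf_of N V v \<le> 1" using cdf_of_props[OF N Vmeas] by auto
    have "cdf_of N V v = max 0 (min 1 v)"
    proof (cases "v < 0")
      case True
      then have "cdf_of N V v \<le> cdf_of N V 0" using mV by (simp add: mono_def)
      then show ?thesis using True r Vunif[of 0] by auto
    next
      case False
      show ?thesis
      proof (cases "v > 1")
        case True
        then have "cdf_of N V 1 \<le> cdf_of N V v" using mV by (simp add: mono_def)
        then show ?thesis using True r Vunif[of 1] by auto
      next
        case False
        then show ?thesis using \<open>\<not> v < 0\<close> Vunif[of v] by auto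
      qed
    qed
    then show ?thesis unfolding VL_def cdf_of_def by simp
  qed
  have J: "measure M (BX \<inter> YL y) = measure N (EU \<inter> VL (FY y))" for y
  proof (cases "\<exists>i<d. \<alpha> i = 0")
    case True
    then obtain i0 where i0: "i0 < d" "\<alpha> i0 = 0" by auto
    have "VaR M (X i0) (\<alpha> i0) = -\<infinity>" using VaR_zero[OF M Xmeas[OF i0(1)]] i0 by simp
    then have "BX = {}" unfolding BX_def AX_def exceed_event_def using i0 by auto
    moreover have "measure N (EU \<inter> VL (FY y)) = 0"
    proof -
      have "EU \<inter> VL (FY y) \<subseteq> {\<omega>\<in>space N. U i0 \<omega> \<le> 0}"
        unfolding EU_def AU_def VL_def using i0 by auto
      then have "measure N (EU \<inter> VL (FY y)) \<le> measure N {\<omega>\<in>space N. U i0 \<omega> \<le> 0}"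
        using Umeas[OF i0(1)] by (intro PN.finite_measure_mono) auto
      also have "\<dots> = 0" using Uunif[OF i0(1), of 0] by (simp add: cdf_of_def)
      finally show ?thesis by (simp add: measure_le_0_iff)
    qed
    ultimately show ?thesis by simp
  next
    case False
    then have apos: "\<And>i. i < d \<Longrightarrow> 0 < \<alpha> i" using alpha by force
    have "\<forall>i. \<exists>q. i < d \<longrightarrow> VaR M (X i) (\<alpha> i) = ereal q \<and> cdf_of M (X i) q = \<alpha> i"
    proof
      fix i show "\<exists>q. i < d \<longrightarrow> VaR M (X i) (\<alpha> i) = ereal q \<and> cdf_of M (X i) q = \<alpha> i"
      proof (cases "i < d")
        case True
        then show ?thesis using VaR_quantile[OF M Xmeas[OF True] Xcont[OF True] apos[OF True]] alpha[OF True]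
          by auto
      qed auto
    qed
    then obtain q where q: "\<And>i. i < d \<Longrightarrow> VaR M (X i) (\<alpha> i) = ereal (q i) \<and> cdf_of M (X i) (q i) = \<alpha> i"
      by metis
    have "BX \<inter> YL y = {\<omega> \<in> space M. (\<forall>i<d. X i \<omega> \<le> q i) \<and> Y \<omega> \<le> y}"
      unfolding BX_def AX_def exceed_event_def YL_def using q by (auto simp: not_less)
    then have "measure M (BX \<inter> YL y) = C (\<lambda>i. cdf_of M (X i) (q i)) (FY y)"
      using copXY FY_def by simp
    also have "\<dots> = measure N {\<omega> \<in> space N. (\<forall>i<d. U i \<omega> \<le> cdf_of M (X i) (q i)) \<and> V \<omega> \<le> FY y}"
      using cdf_of_props(3,4)[OF M Xmeas] FYr by (intro copUV[symmetric]) auto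
    also have "{\<omega> \<in> space N. (\<forall>i<d. U i \<omega> \<le> cdf_of M (X i) (q i)) \<and> V \<omega> \<le> FY y} = EU \<inter> VL (FY y)"
      unfolding EU_def AU_def VL_def using q by (auto simp: not_less)
    finally show ?thesis .
  qed
  have K1: "measure M (AX \<inter> YL y) = measure N (AU \<inter> VL (FY y))" for y
  proof -
    have "AX \<inter> YL y = YL y - (BX \<inter> YL y)" unfolding BX_def YL_def by auto
    then have "measure M (AX \<inter> YL y) = FY y - measure M (BX \<inter> YL y)"
      using BXs YLs FYm by (simp add: PM.finite_measure_Diff)
    moreover have "AU \<inter> VL (FY y) = VL (FY y) - (EU \<inter> VL (FY y))" unfolding EU_def VL_def by auto
    then have "measure N (AU \<inter> VL (FY y)) = FY y - measure N (EU \<inter> VL (FY y))"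
      using EUs VLs FVm FYr by (simp add: PN.finite_measure_Diff)
    ultimately show ?thesis using J by simp
  qed
  have EE: "measure M BX = measure N EU"
  proof (rule ccontr)
    assume ne: "measure M BX \<noteq> measure N EU"
    define \<delta> where "\<delta> = \<bar>measure M BX - measure N EU\<bar>"
    have "\<delta> > 0" using ne \<delta>_def by auto
    then have "eventually (\<lambda>y. FY y > 1 - \<delta>) at_top" using FYlim by (simp add: order_tendstoD)
    then obtain y where y: "FY y > 1 - \<delta>" using eventually_happens'[OF trivial_limit_at_top_linorder] by blast
    have a1: "measure M BX - measure M (BX \<inter> YL y) \<le> 1 - FY y"
      using measure_minus_inter_le[OF M BXs YLs] FYm by simp
    have a2: "measure M (BX \<inter> YL y) \<le> measure M BX" using BXs by (intro PM.finite_measure_mono) auto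
    have b1: "measure N EU - measure N (EU \<inter> VL (FY y)) \<le> 1 - FY y"
      using measure_minus_inter_le[OF N EUs VLs, of "FY y"] FVm[of "FY y"] FYr[of y] by simp
    have b2: "measure N (EU \<inter> VL (FY y)) \<le> measure N EU" using EUs by (intro PN.finite_measure_mono) auto
    have "\<delta> \<le> 1 - FY y" using a1 a2 b1 b2 J[of y] \<delta>_def by linarith
    then show False using y by simp
  qed
  have K2: "measure M AX = measure N AU"
    using EE PM.prob_compl[OF AXs] PN.prob_compl[OF AUs] BX_def EU_def by simp
  have K3: "measure N AU > 0"
  proof -
    have "measure N EU - measure N (EU \<inter> VL 1) \<le> 0"
      using measure_minus_inter_le[OF N EUs VLs, of 1] FVm[of 1] by simp
    moreover have "measure N (EU \<inter> VL 1) \<le> measure N EU" using EUs by (intro PN.finite_measure_mono) auto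
    moreover have "EU \<inter> VL 1 = {\<omega> \<in> space N. (\<forall>i<d. U i \<omega> \<le> \<alpha> i) \<and> V \<omega> \<le> 1}"
      unfolding EU_def AU_def VL_def by (auto simp: not_less)
    moreover have "measure N {\<omega> \<in> space N. (\<forall>i<d. U i \<omega> \<le> \<alpha> i) \<and> V \<omega> \<le> 1} = C \<alpha> 1"
      using alpha by (intro copUV) (auto simp: less_imp_le)
    ultimately have "measure N EU = C \<alpha> 1" by simp
    then show ?thesis using Calpha PN.prob_compl[OF AUs] EU_def by simp
  qed
  define H where "H = cond_cdf N AU V"
  have HK: "cond_cdf M AX Y y = H (FY y)" for y
    using K1[of y] K2 unfolding H_def cond_cdf_def YL_def VL_def by simp
  have Hm: "mono H"
  proof (rule monoI)
    fix v w :: real assume "v \<le> w"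
    then have "measure N (AU \<inter> VL v) \<le> measure N (AU \<inter> VL w)"
      using AUs VLs unfolding VL_def by (intro PN.finite_measure_mono) auto
    then show "H v \<le> H w" unfolding H_def cond_cdf_def VL_def[symmetric] using K3
      by (simp add: divide_right_mono)
  qed
  have H1: "\<beta> \<le> H 1"
  proof -
    have "measure N AU - measure N (AU \<inter> VL 1) \<le> 0"
      using measure_minus_inter_le[OF N AUs VLs, of 1] FVm[of 1] by simp
    moreover have "measure N (AU \<inter> VL 1) \<le> measure N AU" using AUs by (intro PN.finite_measure_mono) auto
    ultimately have "H 1 = 1" unfolding H_def cond_cdf_def VL_def[symmetric] using K3 by simp
    then show ?thesis using beta by simp
  qed
  have Hneg: "H w < \<beta>" if "w < 0" for w
  proof -
    have "measure N (AU \<inter> VL w) \<le> measure N (VL w)" using AUs VLs by (intro PN.finite_measure_mono) auto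
    then have "measure N (AU \<inter> VL w) = 0" using FVm[of w] that by (simp add: measure_le_0_iff)
    then show ?thesis unfolding H_def cond_cdf_def VL_def[symmetric] using beta by simp
  qed
  have Hlip: "H w - H v \<le> (1 / measure N AU) * (w - v)" if "v \<le> w" for v w
  proof -
    have sub: "AU \<inter> VL v \<subseteq> AU \<inter> VL w" using that unfolding VL_def by auto
    have "AU \<inter> VL w - AU \<inter> VL v \<subseteq> VL w - VL v" by auto
    then have "measure N (AU \<inter> VL w - AU \<inter> VL v) \<le> measure N (VL w - VL v)"
      using AUs VLs by (intro PN.finite_measure_mono) auto
    moreover have "measure N (AU \<inter> VL w - AU \<inter> VL v) = measure N (AU \<inter> VL w) - measure N (AU \<inter> VL v)"
      using sub AUs VLs by (intro PN.finite_measure_Diff) auto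
    moreover have "VL v \<subseteq> VL w" using that unfolding VL_def by auto
    then have "measure N (VL w - VL v) = measure N (VL w) - measure N (VL v)"
      using VLs by (intro PN.finite_measure_Diff) auto
    moreover have "max 0 (min 1 w) - max 0 (min 1 v) \<le> w - v" using that by auto
    ultimately have "measure N (AU \<inter> VL w) - measure N (AU \<inter> VL v) \<le> w - v" using FVm by simp
    then have "(measure N (AU \<inter> VL w) - measure N (AU \<inter> VL v)) / measure N AU \<le> (w - v) / measure N AU"
      using K3 by (simp add: divide_right_mono)
    then show ?thesis unfolding H_def cond_cdf_def VL_def[symmetric]
      by (simp add: diff_divide_distrib)
  qed
  obtain t where t: "\<And>w. \<beta> \<le> H w \<longleftrightarrow> t \<le> w"
    using level_set_interval[OF Hm H1 Hneg _ Hlip] K3 by auto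
  have Ht: "gen_inv H \<beta> = ereal t" by (rule gen_inv_interval) (use t in auto)
  have "VCoVaR M d X Y \<alpha> \<beta> = gen_inv (cond_cdf M AX Y) \<beta>" unfolding VCoVaR_def AX_def ..
  also have "\<dots> = gen_inv FY t" unfolding gen_inv_def HK t ..
  finally show ?thesis using Ht unfolding H_def AU_def FY_def by simp
qed

end
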